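(* Let $\phi$ be the real root of $x^3=x^2+x+1$. For $n\ge 3$, if $\langle a_i\rangle_{i=1}^n$ is a sequence of integers, not identically zero, with $a_i=a_{i-1}+a_{i-2}+a_{i-3}$ for $4\le i\le n$ and $a_n=0$, then either $|a_1|>0.01\phi^{n/2}$ or $|a_2|>0.01\phi^{(n-1)/2}$ (or both). *)

theory Defs
  imports Complex_Main
begin

definition trib_phi :: real where
  "trib_phi = (THE x::real. x ^ 3 = x ^ 2 + x + 1)"

end

theory Submission
  imports Defs
begin

lemma phi_props: "trib_phi ^ 3 = trib_phi ^ 2 + trib_phi + 1 \<and> 1.839 < trib_phi \<and> trib_phi < 1.8394"
proof -
  have "\<exists>x::real. 1.839 \<le> x \<and> x \<le> 1.8394 \<and> x ^ 3 - x ^ 2 - x = 1"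
  proof (rule IVT)
    show "(1.839::real) ^ 3 - 1.839 ^ 2 - 1.839 \<le> 1" by (simp add: power_numeral_reduce)
    show "1 \<le> (1.8394::real) ^ 3 - 1.8394 ^ 2 - 1.8394" by (simp add: power_numeral_reduce)
  qed (auto intro!: continuous_intros)
  then obtain x :: real where x: "1.839 \<le> x" "x \<le> 1.8394" "x ^ 3 - x ^ 2 - x = 1" by blast
  have x3: "x ^ 3 = x ^ 2 + x + 1" using x(3) by simp
  have uniq: "y = x" if y: "y ^ 3 = y ^ 2 + y + 1" for y :: real
  proof -
    have e: "(y - x) * (y ^ 2 + (x - 1) * y + (x ^ 2 - x - 1)) = 0"
      using x3 y by algebra
    have e4: "4 * (y ^ 2 + (x - 1) * y + (x ^ 2 - x - 1)) = (2*y + (x - 1))^2 + (3*x - 5) * (x + 1)"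
      by (simp add: algebra_simps power2_eq_square)
    have "(3*x - 5) * (x + 1) > 0" using x(1) by (intro mult_pos_pos) auto
    moreover have "(2*y + (x - 1))^2 \<ge> 0" by simp
    ultimately have "0 < (2*y + (x - 1))^2 + (3*x - 5) * (x + 1)" by (intro add_nonneg_pos)
    hence "0 < 4 * (y ^ 2 + (x - 1) * y + (x ^ 2 - x - 1))" by (simp only: e4)
    hence "y ^ 2 + (x - 1) * y + (x ^ 2 - x - 1) > 0" by simp
    with e show ?thesis by simp
  qed
  have "trib_phi = x"
    unfolding trib_phi_def by (rule the_equality, rule x3, erule uniq)
  moreover have "x \<noteq> 1.839"
  proof
    have l: "(1.839::real)^3 - 1.839^2 - 1.839 < 1" by (simp add: power_numeral_reduce)
    assume "x = 1.839" with x(3) l show False by simp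
  qed
  moreover have "x \<noteq> 1.8394"
  proof
    have l: "1 < (1.8394::real)^3 - 1.8394^2 - 1.8394" by (simp add: power_numeral_reduce)
    assume "x = 1.8394" with x(3) l show False by simp
  qed
  ultimately show ?thesis using x(1,2) x3 by (simp add: order.strict_iff_order)
qed

definition Qf :: "real \<Rightarrow> real \<Rightarrow> real \<Rightarrow> real" where
  "Qf f u v = v^2 + (f-1)*u*v + (f^2-f-1)*u^2"

lemma qf_nonneg:
  fixes \<alpha> \<beta> \<gamma> p q :: real
  assumes "\<alpha> > 0" "\<beta>^2 \<le> 4*\<alpha>*\<gamma>"
  shows "\<alpha>*p^2 + \<beta>*p*q + \<gamma>*q^2 \<ge> 0"
proof -
  have "4*\<alpha>*(\<alpha>*p^2 + \<beta>*p*q + \<gamma>*q^2) = (2*\<alpha>*p + \<beta>*q)^2 + (4*\<alpha>*\<gamma> - \<beta>^2)*q^2"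
    by (simp add: algebra_simps power2_eq_square)
  also have "\<dots> \<ge> 0" using assms by (intro add_nonneg_nonneg mult_nonneg_nonneg) auto
  finally show ?thesis using assms(1) by (simp add: zero_le_mult_iff)
qed

lemma qf_nonneg2:
  fixes \<alpha> \<beta> \<gamma> loa lob loc p q :: real
  assumes "loa > 0" "lob^2 \<le> 4*loa*loc" "\<alpha> \<ge> loa" "\<gamma> \<ge> loc" "\<bar>\<beta>\<bar> \<le> lob"
  shows "\<alpha>*p^2 + \<beta>*p*q + \<gamma>*q^2 \<ge> 0"
proof -
  have "loa*\<bar>p\<bar>^2 + (-lob)*\<bar>p\<bar>*\<bar>q\<bar> + loc*\<bar>q\<bar>^2 \<ge> 0"
    using assms(1,2) by (intro qf_nonneg) auto
  moreover have "\<alpha>*p^2 \<ge> loa*\<bar>p\<bar>^2" using assms(3) by (simp add: mult_right_mono)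
  moreover have "\<gamma>*q^2 \<ge> loc*\<bar>q\<bar>^2" using assms(4) by (simp add: mult_right_mono)
  moreover have "\<beta>*p*q \<ge> (-lob)*\<bar>p\<bar>*\<bar>q\<bar>"
  proof -
    have "\<bar>\<beta>*p*q\<bar> \<le> lob*\<bar>p\<bar>*\<bar>q\<bar>"
      using assms(5) by (simp add: abs_mult mult_right_mono)
    thus ?thesis by linarith
  qed
  ultimately show ?thesis by linarith
qed

lemma Qf_nonneg:
  assumes "1.839 < f" "f < 1.8394" "f^2 > 3.3819" "f^2 < 3.3834"
  shows "Qf f u v \<ge> 0"
proof -
  have "(f^2-f-1)*u^2 + (f-1)*u*v + 1*v^2 \<ge> 0"
    by (rule qf_nonneg2[where loa="0.54" and lob="0.84" and loc=1]) (use assms in \<open>auto simp: power2_eq_square\<close>)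
  thus ?thesis unfolding Qf_def by (simp add: algebra_simps)
qed

lemma step_Q:
  fixes f x y z z' :: real
  assumes f3: "f^3 = f^2+f+1" and "z' = z + y + x"
  shows "Qf f (z - f*y) (z' - f*z) = (f^2-f-1) * Qf f (y - f*x) (z - f*y)"
  unfolding Qf_def using assms by algebra

lemma step_S:
  fixes f x y z z' :: real
  assumes f3: "f^3 = f^2+f+1" and "z' = z + y + x"
  shows "z' + (f-1)*z + (f^2-f-1)*y = f * (z + (f-1)*y + (f^2-f-1)*x)"
proof -
  have "f * (z + (f-1)*y + (f^2-f-1)*x) - (z' + (f-1)*z + (f^2-f-1)*y) = x*(f^3-f^2-f-1)"
    unfolding assms(2) by (simp add: algebra_simps power2_eq_square power3_eq_cube)
  with f3 show ?thesis by simp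
qed

lemma end_Q1:
  assumes f3: "f^3 = f^2+f+1" and "1.839 < f" "f < 1.8394" "f^2 > 3.3819" "f^2 < 3.3834"
  shows "Qf f (q - f*p) (0 - f*q) \<ge> p^2 + q^2"
proof -
  have e: "Qf f (q - f*p) (0 - f*q) - (p^2+q^2) = (f-1)*p^2 + (f-1)*p*q + (f^2-2)*q^2"
    unfolding Qf_def using f3 by algebra
  have "(f-1)*p^2 + (f-1)*p*q + (f^2-2)*q^2 \<ge> 0"
    by (rule qf_nonneg2[where loa="0.8" and lob="0.9" and loc="1.3"]) (use assms in \<open>auto simp: power2_eq_square\<close>)
  with e show ?thesis by linarith
qed

lemma end_Q2:
  assumes f3: "f^3 = f^2+f+1" and "1.839 < f" "f < 1.8394" "f^2 > 3.3819" "f^2 < 3.3834"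
  shows "Qf f (q - f*p) (0 - f*q) \<ge> 2 * (0 + (f-1)*q + (f^2-f-1)*p)^2"
proof -
  have e: "Qf f (q - f*p) (0 - f*q) - 2 * (0 + (f-1)*q + (f^2-f-1)*p)^2
     = (2*f^2-3*f)*p^2 + (4*f^2-3*f-9)*p*q + (4*f-3-f^2)*q^2"
    unfolding Qf_def using f3 by algebra
  have "(2*f^2-3*f)*p^2 + (4*f^2-3*f-9)*p*q + (4*f-3-f^2)*q^2 \<ge> 0"
    by (rule qf_nonneg2[where loa="1.2" and lob="1.1" and loc="0.9"]) (use assms in \<open>auto simp: power2_eq_square\<close>)
  with e show ?thesis by linarith
qed

lemma final_contra:
  fixes f x y s P Q1 :: real
  assumes f3: "f^3 = f^2+f+1" and fb: "1.839 < f" "f < 1.8394" "f^2 > 3.3819" "f^2 < 3.3834"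
    and Q1: "Q1 = Qf f (y - f*x) (s - (f-1)*y - (f^2-f-1)*x - f*y)"
    and P: "Q1 \<ge> P" "P > 0" and s: "s^2 \<le> Q1/2"
    and x: "x^2 \<le> 1/10000 * f^3 * P" and y: "y^2 \<le> 1/10000 * f^2 * P"
  shows False
proof -
  define u where "u = y - f*x"
  define w where "w = - (2*f-1)*y - (f^2-f-1)*x"
  have Q1': "Q1 = Qf f u (w + s)" unfolding Q1 u_def w_def by (simp add: algebra_simps)
  have "4 * Qf f u w + (4/3)*s^2 - Q1 = Qf f (3*u) (3*w - s) / 3"
    unfolding Q1' Qf_def by (simp add: algebra_simps power2_eq_square)
  moreover have "Qf f (3*u) (3*w - s) \<ge> 0" using fb by (rule Qf_nonneg)
  ultimately have "Q1 \<le> 4 * Qf f u w + (4/3)*s^2" by linarith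
  with s have Q1G: "Q1 \<le> 12 * Qf f u w" by linarith
  have uw: "2*\<bar>u*w\<bar> \<le> u^2 + w^2"
  proof -
    have "0 \<le> (\<bar>u\<bar> - \<bar>w\<bar>)^2" by simp
    thus ?thesis by (simp add: power2_eq_square algebra_simps abs_mult)
  qed
  have "(f-1)*u*w \<le> \<bar>u*w\<bar>"
  proof -
    have "(f-1)*u*w \<le> \<bar>(f-1)*u*w\<bar>" by simp
    also have "\<dots> = (f-1)*\<bar>u*w\<bar>" using fb by (simp add: abs_mult)
    also have "\<dots> \<le> \<bar>u*w\<bar>" using fb by (simp add: mult_left_le_one_le)
    finally show ?thesis .
  qed
  moreover have "(f^2-f-1)*u^2 \<le> u^2" using fb by (simp add: mult_left_le_one_le)
  ultimately have G: "Qf f u w \<le> (3/2)*u^2+(3/2)*w^2" unfolding Qf_def using uw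
  proof -
    assume h: "(f-1)*u*w \<le> \<bar>u*w\<bar>" "(f^2-f-1)*u^2 \<le> u^2" "2*\<bar>u*w\<bar> \<le> u^2 + w^2"
    define A where "A = (f-1)*u*w"
    define B where "B = (f^2-f-1)*u^2"
    define C where "C = \<bar>u*w\<bar>"
    define U where "U = u^2"
    define W where "W = w^2"
    have "A \<le> C" "B \<le> U" "2*C \<le> U + W" using h unfolding A_def B_def C_def U_def W_def by auto
    hence "W + A + B \<le> (3/2)*U+(3/2)*W" by linarith
    thus "w^2 + (f-1)*u*w + (f^2-f-1)*u^2 \<le> (3/2)*u^2+(3/2)*w^2" unfolding A_def B_def U_def W_def .
  qed
  have sq2: "(p+q)^2 \<le> 2*p^2 + 2*q^2" for p q :: real
  proof -
    have "0 \<le> (p-q)^2" by simp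
    thus ?thesis by (simp add: power2_eq_square algebra_simps)
  qed
  have "u^2 \<le> 2*y^2 + 2*(f*x)^2" unfolding u_def using sq2[of y "-(f*x)"] by simp
  moreover have "(f*x)^2 \<le> (33834/10000) * x^2" unfolding power_mult_distrib using fb
    by (intro mult_right_mono) auto
  ultimately have u2: "u^2 \<le> 2*y^2 + 7*x^2" using zero_le_power2[of x] by linarith
  have sq2': "(p-q)^2 \<le> 2*p^2 + 2*q^2" for p q :: real
  proof -
    have "0 \<le> (p+q)^2" by simp
    thus ?thesis by (simp add: power2_eq_square algebra_simps)
  qed
  have "w = -((2*f-1)*y) - (f^2-f-1)*x" unfolding w_def by (simp add: algebra_simps)
  hence "w^2 \<le> 2*(-((2*f-1)*y))^2 + 2*((f^2-f-1)*x)^2" by (simp only: sq2')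
  hence "w^2 \<le> 2*((2*f-1)*y)^2 + 2*((f^2-f-1)*x)^2" by (simp only: power2_minus)
  moreover have "((2*f-1)*y)^2 \<le> (72/10) * y^2" unfolding power_mult_distrib
  proof (intro mult_right_mono)
    show "(2*f-1)^2 \<le> 7.2" using fb by (simp add: power2_eq_square algebra_simps)
  qed simp
  moreover have "((f^2-f-1)*x)^2 \<le> (3/10) * x^2" unfolding power_mult_distrib
  proof (intro mult_right_mono)
    have "(f^2-f-1)^2 \<le> 0.545^2" using fb by (intro power_mono) auto
    thus "(f^2-f-1)^2 \<le> 0.3" by (simp add: power2_eq_square)
  qed simp
  ultimately have w2: "w^2 \<le> 15*y^2 + 1*x^2" using zero_le_power2[of x] zero_le_power2[of y] by linarith
  have "x^2 \<le> (624/1000000) * P"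
  proof -
    have "1/10000 * f^3 \<le> (624/1000000)" using f3 fb by simp
    hence "1/10000 * f^3 * P \<le> (624/1000000) * P" using P(2) by (intro mult_right_mono) auto
    thus ?thesis using x by linarith
  qed
  moreover have "y^2 \<le> (339/1000000) * P"
  proof -
    have "1/10000 * f^2 \<le> (339/1000000)" using fb by simp
    hence "1/10000 * f^2 * P \<le> (339/1000000) * P" using P(2) by (intro mult_right_mono) auto
    thus ?thesis using y by linarith
  qed
  ultimately show False using Q1G G u2 w2 P by linarith
qed


lemma nonzero_end:
  fixes n :: nat and a :: "nat \<Rightarrow> int"
  assumes "n \<ge> 3"
    and "\<exists>i\<in>{1..n}. a i \<noteq> 0"
    and rec: "\<And>i. 4 \<le> i \<Longrightarrow> i \<le> n \<Longrightarrow> a i = a (i - 1) + a (i - 2) + a (i - 3)"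
    and "a n = 0"
  shows "a (n-2) \<noteq> 0 \<or> a (n-1) \<noteq> 0"
proof (rule ccontr)
  assume "\<not> ?thesis"
  hence z: "a (n-2) = 0" "a (n-1) = 0" by auto
  have "\<forall>k. k + 3 \<le> n \<longrightarrow> a (n-2-k) = 0 \<and> a (n-1-k) = 0 \<and> a (n-k) = 0"
  proof
    fix k show "k + 3 \<le> n \<longrightarrow> a (n-2-k) = 0 \<and> a (n-1-k) = 0 \<and> a (n-k) = 0"
    proof (induction k)
      case 0 then show ?case using z assms(4) by simp
    next
      case (Suc k)
      show ?case
      proof
        assume h: "Suc k + 3 \<le> n"
        with Suc.IH have ih: "a (n-2-k) = 0" "a (n-1-k) = 0" "a (n-k) = 0" by auto
        have "a (n-k) = a (n-k-1) + a (n-k-2) + a (n-k-3)" using h by (intro rec) auto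
        moreover have "n-k-1 = n-1-k" "n-k-2 = n-2-k" by auto
        ultimately have "a (n-k-3) = 0" using ih by simp
        moreover have "n-2-Suc k = n-k-3" "n-1-Suc k = n-2-k" "n - Suc k = n-1-k" by auto
        ultimately show "a (n-2-Suc k) = 0 \<and> a (n-1-Suc k) = 0 \<and> a (n-Suc k) = 0"
          using ih by simp
      qed
    qed
  qed
  hence all0: "a i = 0" if "i \<in> {1..n}" for i
  proof -
    assume H: "\<forall>k. k + 3 \<le> n \<longrightarrow> a (n-2-k) = 0 \<and> a (n-1-k) = 0 \<and> a (n-k) = 0"
    show ?thesis
    proof (cases "i \<ge> n - 2")
      case True
      then have "i = n-2 \<or> i = n-1 \<or> i = n" using that by auto
      moreover have "a (n-2) = 0 \<and> a (n-1) = 0 \<and> a n = 0"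
        using H[rule_format, of 0] assms(1) by simp
      ultimately show ?thesis by (elim disjE) simp_all
    next
      case False
      then have "(n-2-i) + 3 \<le> n" "n-2-(n-2-i) = i" using that by auto
      moreover have "a (n-2-(n-2-i)) = 0" using H[rule_format, of "n-2-i"] calculation(1) by blast
      ultimately show ?thesis by simp
    qed
  qed
  thus False using assms(2) by auto
qed

theorem corollary2:
  fixes n :: nat and a :: "nat \<Rightarrow> int"
  assumes "n \<ge> 3"
    and "\<exists>i\<in>{1..n}. a i \<noteq> 0"
    and "\<And>i. 4 \<le> i \<Longrightarrow> i \<le> n \<Longrightarrow> a i = a (i - 1) + a (i - 2) + a (i - 3)"
    and "a n = 0"
  shows "\<bar>real_of_int (a 1)\<bar> > 0.01 * trib_phi powr (real n / 2)
       \<or> \<bar>real_of_int (a 2)\<bar> > 0.01 * trib_phi powr ((real n - 1) / 2)"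
proof (rule ccontr)
  assume neg: "\<not> ?thesis"
  define f where "f = trib_phi"
  have f3: "f^3 = f^2+f+1" and fb: "1.839 < f" "f < 1.8394"
    using phi_props unfolding f_def by auto
  have "(1.839::real)^2 < f^2" using fb by (intro power_strict_mono) auto
  hence f2l: "f^2 > 3.3819" by (simp add: power2_eq_square)
  have "f^2 < (1.8394::real)^2" using fb by (intro power_strict_mono) auto
  hence f2u: "f^2 < 3.3834" by (simp add: power2_eq_square)
  note fb' = fb f2l f2u
  have fpos: "f > 0" using fb by simp
  have cf: "f * (f^2-f-1) = 1" using f3 by algebra
  define r where "r i = real_of_int (a i)" for i
  define Qs where "Qs i = Qf f (r (i+1) - f * r i) (r (i+2) - f * r (i+1))" for i
  define Ss where "Ss i = r (i+2) + (f-1) * r (i+1) + (f^2-f-1) * r i" for i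
  have rec: "r (i+3) = r (i+2) + r (i+1) + r i" if "i + 3 \<le> n" "1 \<le> i" for i
  proof -
    have "a (i+3) = a (i+3-1) + a (i+3-2) + a (i+3-3)" using that by (intro assms(3)) auto
    thus ?thesis unfolding r_def by simp
  qed
  have stepQ: "Qs i = f * Qs (i+1)" if "i + 3 \<le> n" "1 \<le> i" for i
  proof -
    have "Qs (i+1) = (f^2-f-1) * Qs i"
      unfolding Qs_def using step_Q[OF f3 rec[OF that]]
      by (simp add: add.assoc numeral_Bit1 numeral_One)
    hence "f * Qs (i+1) = (f * (f^2-f-1)) * Qs i" by simp
    thus ?thesis using cf by simp
  qed
  have stepS: "Ss (i+1) = f * Ss i" if "i + 3 \<le> n" "1 \<le> i" for i
    unfolding Ss_def using step_S[OF f3 rec[OF that]]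
    by (simp add: add.assoc numeral_Bit1 numeral_One)
  have iter: "k + 3 \<le> n \<longrightarrow> Qs 1 = f^k * Qs (1+k) \<and> Ss (1+k) = f^k * Ss 1" for k
  proof (induction k)
    case 0 then show ?case by simp
  next
    case (Suc k)
    show ?case
    proof
      assume h: "Suc k + 3 \<le> n"
      with Suc.IH have ih: "Qs 1 = f^k * Qs (1+k)" "Ss (1+k) = f^k * Ss 1" by auto
      have "Qs (1+k) = f * Qs (1+k+1)" "Ss (1+k+1) = f * Ss (1+k)"
        using h by (intro stepQ stepS; simp)+
      with ih show "Qs 1 = f^Suc k * Qs (1+Suc k) \<and> Ss (1+Suc k) = f^Suc k * Ss 1"
        by (simp add: mult_ac)
    qed
  qed
  define P where "P = f^(n-3)"
  have nk: "1 + (n-3) = n-2" using assms(1) by simp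
  have QP: "Qs 1 = P * Qs (n-2)" and SP: "Ss (n-2) = P * Ss 1"
    using iter[of "n-3"] assms(1) unfolding P_def nk by auto
  have Ppos: "P \<ge> 1" unfolding P_def using fb by (intro one_le_power) auto
  define p where "p = r (n-2)"
  define q where "q = r (n-1)"
  have e1: "n-2+1 = n-1" "n-2+2 = n" using assms(1) by auto
  have rn: "r n = 0" unfolding r_def using assms(4) by simp
  have Qend: "Qs (n-2) = Qf f (q - f*p) (0 - f*q)"
    unfolding Qs_def e1 rn p_def q_def by simp
  have Send: "Ss (n-2) = 0 + (f-1)*q + (f^2-f-1)*p"
    unfolding Ss_def e1 rn p_def q_def by simp
  have pq1: "p^2 + q^2 \<ge> 1"
  proof -
    have "a (n-2) \<noteq> 0 \<or> a (n-1) \<noteq> 0" using nonzero_end[OF assms] .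
    moreover have "real_of_int (a j) ^ 2 \<ge> 1" if "a j \<noteq> 0" for j
    proof -
      have "\<bar>a j\<bar> \<ge> 1" using that by simp
      hence "\<bar>real_of_int (a j)\<bar> \<ge> 1" by linarith
      hence "1 \<le> \<bar>real_of_int (a j)\<bar>^2" by (rule one_le_power)
      thus ?thesis by simp
    qed
    ultimately show ?thesis unfolding p_def q_def r_def
      using zero_le_power2[of "real_of_int (a (n-2))"] zero_le_power2[of "real_of_int (a (n-1))"]
      by (metis add.commute add_increasing)
  qed
  have Qe1: "Qs (n-2) \<ge> 1" using end_Q1[OF f3 fb', where p=p and q=q] pq1 Qend by linarith
  have Qe2: "Qs (n-2) \<ge> 2 * Ss (n-2)^2" using end_Q2[OF f3 fb', where p=p and q=q] Qend Send by simp
  have Q1P: "Qs 1 \<ge> P" using QP Qe1 Ppos by simp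
  have S1: "Ss 1 ^2 \<le> Qs 1 / 2"
  proof -
    have "1 \<le> P^2" using Ppos by (rule one_le_power)
    hence "1 * Ss 1 ^2 \<le> P^2 * Ss 1 ^2" by (rule mult_right_mono) simp
    hence "Ss 1 ^2 \<le> P^2 * Ss 1 ^2" by simp
    also have "\<dots> = Ss (n-2) ^ 2" using SP by (simp add: power_mult_distrib)
    also have "\<dots> \<le> Qs (n-2) / 2" using Qe2 by simp
    also have "\<dots> \<le> P * Qs (n-2) / 2" using Ppos Qe1 by simp
    finally show ?thesis using QP by simp
  qed
  have n1: "\<bar>r 1\<bar> \<le> 0.01 * f powr (real n / 2)" and n2: "\<bar>r 2\<bar> \<le> 0.01 * f powr ((real n - 1) / 2)"
    using neg unfolding r_def f_def by auto
  have pw: "(f powr t)^2 = f powr (2*t)" for t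
    by (simp add: power2_eq_square powr_add[symmetric])
  have sq01: "(0.01 * F)^2 = 1/10000 * F^2" for F :: real by (simp add: power2_eq_square)
  have x2: "r 1 ^ 2 \<le> 1/10000 * f^3 * P"
  proof -
    have "\<bar>r 1\<bar>^2 \<le> (0.01 * f powr (real n / 2))^2" using n1 by (intro power_mono) auto
    also have "\<dots> = 1/10000 * (f powr (real n / 2))^2" by (rule sq01)
    also have "\<dots> = 1/10000 * f powr (real n)" by (simp add: pw)
    also have "f powr (real n) = f^n" using fpos by (simp add: powr_realpow)
    also have "f^n = f^3 * P" unfolding P_def using assms(1) by (simp add: power_add[symmetric])
    finally show ?thesis by simp
  qed
  have y2: "r 2 ^ 2 \<le> 1/10000 * f^2 * P"
  proof -
    have "\<bar>r 2\<bar>^2 \<le> (0.01 * f powr ((real n - 1) / 2))^2" using n2 by (intro power_mono) auto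
    also have "\<dots> = 1/10000 * (f powr ((real n - 1) / 2))^2" by (rule sq01)
    also have "\<dots> = 1/10000 * f powr (real (n-1))" proof -
      have "2 * ((real n - 1) / 2) = real (n-1)" using assms(1) by (simp add: of_nat_diff)
      thus ?thesis by (simp only: pw)
    qed
    also have "f powr (real (n-1)) = f^(n-1)" using fpos by (simp add: powr_realpow)
    also have "f^(n-1) = f^2 * P"
    proof -
      have e: "n - 1 = 2 + (n-3)" using assms(1) by simp
      show ?thesis unfolding P_def e by (rule power_add)
    qed
    finally show ?thesis by simp
  qed
  have Q1e: "Qs 1 = Qf f (r 2 - f * r 1) (Ss 1 - (f-1) * r 2 - (f^2-f-1) * r 1 - f * r 2)"
    unfolding Qs_def Ss_def by (simp add: algebra_simps numeral_2_eq_2 numeral_3_eq_3)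
  show False
    using final_contra[OF f3 fb' Q1e Q1P _ S1 x2 y2] Ppos by linarith
qed

end
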